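(* Let $p:\mathcal P\to[1,\infty]$ be measurable, let $E\subset\mathcal P$ be measurable with $\mu(E)<\infty$, and let $E_n=\{x\in E:p(x)>n\}$, $n=1,2,\dots$. Then $$e^{p(\cdot)}\in\bigcap_{q\in[1,\infty)}L^q(E)\quad\iff\quad\|\chi_{E_n}\|_{L^{p(\cdot)}(E)}\to0\ \text{ as } n\to\infty.$$ Moreover, if $\|e^{p(\cdot)}\|_{L^{q_0}(E)}=\infty$ for some $q_0\in[1,\infty)$, then $\|\chi_{E_n}\|_{L^{p(\cdot)}(E)}\ge e^{-q_0}$ for every $n=1,2,\dots$.
   Context: $(\mathcal P,\mu)$ is a measure space (in the paper, a metric space with a positive complete Borel measure). For measurable $E$ and $p:E\to[1,\infty]$, the Luxemburg norm is $\|f\|_{L^{p(\cdot)}(E)}=\inf\{\lambda>0:\int_E(|f(x)|/\lambda)^{p(x)}\,d\mu(x)\le1\}$, with the convention $a^\infty=0$ for $0\le a<1$, $1^\infty=1$, and $a^\infty=\infty$ for $a>1$. *)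

theory Defs
  imports "HOL-Analysis.Analysis"
begin

definition varpow :: "real \<Rightarrow> ereal \<Rightarrow> ennreal" where
  "varpow a q = (if q = \<infinity> then (if a < 1 then 0 else if a = 1 then 1 else \<infinity>)
                 else ennreal (a powr (real_of_ereal q)))"

definition modular :: "'a measure \<Rightarrow> ('a \<Rightarrow> ereal) \<Rightarrow> 'a set \<Rightarrow> ('a \<Rightarrow> real) \<Rightarrow> ennreal" where
  "modular M p E f = (\<integral>\<^sup>+ x\<in>E. varpow \<bar>f x\<bar> (p x) \<partial>M)"

text \<open>Luxemburg norm (value \<infinity> if no admissible \<lambda> exists).\<close>
definition lux_norm :: "'a measure \<Rightarrow> ('a \<Rightarrow> ereal) \<Rightarrow> 'a set \<Rightarrow> ('a \<Rightarrow> real) \<Rightarrow> ereal" where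
  "lux_norm M p E f =
     Inf {ereal l | l. l > 0 \<and> modular M p E (\<lambda>x. f x / l) \<le> 1}"

definition exp_p_pow :: "real \<Rightarrow> ereal \<Rightarrow> ennreal" where
  "exp_p_pow q t = (if t = \<infinity> then \<infinity> else ennreal (exp (q * real_of_ereal t)))"

end

theory Submission
  imports Defs
begin

lemma m1: assumes "p \<in> borel_measurable M" shows "(\<lambda>x. exp_p_pow q (p x)) \<in> borel_measurable M"
proof -
  have "{x \<in> space M. p x = \<infinity>} = p -` {\<infinity>} \<inter> space M" by auto
  also have "\<dots> \<in> sets M" using assms by (rule measurable_sets) auto
  finally have [measurable]: "{x \<in> space M. p x = \<infinity>} \<in> sets M" .
  show ?thesis using assms unfolding exp_p_pow_def by measurable
qed

lemma lux_nonneg: "0 \<le> lux_norm M p E f"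
  unfolding lux_norm_def by (rule Inf_greatest) auto

lemma lux_le: assumes "l > 0" "modular M p E (\<lambda>x. f x / l) \<le> 1"
  shows "lux_norm M p E f \<le> ereal l"
  unfolding lux_norm_def by (rule Inf_lower) (use assms in auto)

lemma claim2:
  fixes M :: "'a measure" and p :: "'a \<Rightarrow> ereal" and E :: "'a set"
  assumes p_meas: "p \<in> borel_measurable M"
    and p_range: "\<forall>x\<in>space M. 1 \<le> p x"
    and E_meas: "E \<in> sets M"
    and E_fin: "emeasure M E < \<infinity>"
    and q0: "1 \<le> q0" and inf: "(\<integral>\<^sup>+ x\<in>E. exp_p_pow q0 (p x) \<partial>M) = \<infinity>"
  shows "lux_norm M p E (indicator {x\<in>E. p x > ereal (real n)}) \<ge> ereal (exp (- q0))"
proof -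
  define F where "F = {x\<in>E. p x > ereal (real n)}"
  have Esp: "E \<subseteq> space M" using E_meas sets.sets_into_space by blast
  have [measurable]: "F \<in> sets M"
  proof -
    have "F = E \<inter> (p -` {ereal (real n)<..} \<inter> space M)" using Esp unfolding F_def by auto
    also have "\<dots> \<in> sets M" using E_meas measurable_sets[OF p_meas, of "{ereal (real n)<..}"] by auto
    finally show ?thesis .
  qed
  have [measurable]: "E \<in> sets M" by fact
  note pm[measurable] = m1[OF p_meas, of q0]
  have FE: "F \<subseteq> E" unfolding F_def by auto
  have big: "(\<integral>\<^sup>+ x. exp_p_pow q0 (p x) * indicator F x \<partial>M) = \<infinity>"
  proof (rule ccontr)
    assume ne: "(\<integral>\<^sup>+ x. exp_p_pow q0 (p x) * indicator F x \<partial>M) \<noteq> \<infinity>"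
    have split: "\<And>x. exp_p_pow q0 (p x) * indicator E x =
        exp_p_pow q0 (p x) * indicator F x + exp_p_pow q0 (p x) * indicator (E - F) x"
      using FE by (auto split: split_indicator)
    have "(\<integral>\<^sup>+ x\<in>E. exp_p_pow q0 (p x) \<partial>M) =
        (\<integral>\<^sup>+ x. exp_p_pow q0 (p x) * indicator F x \<partial>M) + (\<integral>\<^sup>+ x. exp_p_pow q0 (p x) * indicator (E - F) x \<partial>M)"
      unfolding split by (rule nn_integral_add) measurable
    moreover have "(\<integral>\<^sup>+ x. exp_p_pow q0 (p x) * indicator (E - F) x \<partial>M) \<le> (\<integral>\<^sup>+ x. ennreal (exp (q0 * real n)) * indicator E x \<partial>M)"
    proof (rule nn_integral_mono)
      fix x assume "x \<in> space M"
      show "exp_p_pow q0 (p x) * indicator (E - F) x \<le> ennreal (exp (q0 * real n)) * indicator E x"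
      proof (cases "x \<in> E - F")
        case True
        then have "p x \<le> ereal (real n)" unfolding F_def by auto
        moreover have "p x \<ge> 1" using p_range \<open>x \<in> space M\<close> by auto
        ultimately obtain r where r: "p x = ereal r" "r \<le> real n" by (cases "p x") auto
        have "exp (q0 * r) \<le> exp (q0 * real n)" using r q0 by (simp add: mult_left_mono)
        then show ?thesis using True r by (auto simp: exp_p_pow_def)
      qed (auto split: split_indicator)
    qed
    moreover have "(\<integral>\<^sup>+ x. ennreal (exp (q0 * real n)) * indicator E x \<partial>M) < \<infinity>"
      using E_fin E_meas by (simp add: nn_integral_cmult_indicator ennreal_mult_less_top)
    ultimately have "(\<integral>\<^sup>+ x. exp_p_pow q0 (p x) * indicator (E - F) x \<partial>M) < \<infinity>" "(\<integral>\<^sup>+x\<in>E. exp_p_pow q0 (p x)\<partial>M) = (\<integral>\<^sup>+ x. exp_p_pow q0 (p x) * indicator F x \<partial>M) + (\<integral>\<^sup>+ x. exp_p_pow q0 (p x) * indicator (E - F) x \<partial>M)" by auto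
    then show False using ne inf by (metis ennreal_add_eq_top infinity_ennreal_def less_top)
  qed
  show ?thesis
    unfolding lux_norm_def F_def[symmetric]
  proof (rule Inf_greatest)
    fix y assume "y \<in> {ereal l |l. 0 < l \<and> modular M p E (\<lambda>x. indicator F x / l) \<le> 1}"
    then obtain l where l: "y = ereal l" "0 < l" "modular M p E (\<lambda>x. indicator F x / l) \<le> 1" by auto
    show "ereal (exp (- q0)) \<le> y"
    proof (rule ccontr)
      assume "\<not> ?thesis"
      then have ll: "l < exp (- q0)" using l by auto
      have il: "exp q0 < 1 / l" using ll l(2) by (simp add: exp_minus field_simps)
      have "exp 1 \<le> exp q0" using q0 by simp
      then have il1: "1 < 1 / l" using il exp_gt_one[of 1] by linarith
      have "(\<integral>\<^sup>+ x. exp_p_pow q0 (p x) * indicator F x \<partial>M) \<le> modular M p E (\<lambda>x. indicator F x / l)"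
        unfolding modular_def
      proof (rule nn_integral_mono)
        fix x assume "x \<in> space M"
        show "exp_p_pow q0 (p x) * indicator F x \<le> varpow \<bar>indicator F x / l\<bar> (p x) * indicator E x"
        proof (cases "x \<in> F")
          case True
          then have xE: "x \<in> E" using FE by auto
          have ab: "\<bar>indicator F x / l\<bar> = 1 / l" using True l(2) by simp
          have "exp_p_pow q0 (p x) \<le> varpow (1 / l) (p x)"
          proof (cases "p x")
            case (real r)
            have "r \<ge> 1" using p_range \<open>x \<in> space M\<close> real by auto
            have "exp (q0 * r) = exp q0 powr r" by (simp add: powr_def)
            also have "\<dots> \<le> (1/l) powr r" using il \<open>r \<ge> 1\<close> by (intro powr_mono2) auto
            finally show ?thesis using real by (simp add: exp_p_pow_def varpow_def)
          next
            case PInf then show ?thesis using il1 by (auto simp add: varpow_def exp_p_pow_def)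
          next
            case MInf then show ?thesis using p_range \<open>x \<in> space M\<close> by auto
          qed
          then show ?thesis using True xE ab by simp
        qed simp
      qed
      then have "top \<le> (1::ennreal)" using big l(3) by (metis order.trans infinity_ennreal_def)
      then show False by (simp add: top_unique)
    qed
  qed
qed


lemma claim1:
  fixes M :: "'a measure" and p :: "'a \<Rightarrow> ereal" and E :: "'a set"
  assumes p_meas: "p \<in> borel_measurable M"
    and E_meas: "E \<in> sets M"
    and fin: "\<forall>q::real. 1 \<le> q \<longrightarrow> (\<integral>\<^sup>+ x\<in>E. exp_p_pow q (p x) \<partial>M) < \<infinity>"
    and eps: "0 < \<epsilon>" "\<epsilon> < 1"
  shows "eventually (\<lambda>n. lux_norm M p E (indicator {x\<in>E. p x > ereal (real n)}) \<le> ereal \<epsilon>) sequentially"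
proof -
  define q where "q = ln (1/\<epsilon>) + 1"
  have lpos: "ln (1/\<epsilon>) > 0" using eps by simp
  have q1: "1 \<le> q" using lpos unfolding q_def by simp
  note pm[measurable] = m1[OF p_meas, of q]
  have [measurable]: "E \<in> sets M" by fact
  have Cfin: "(\<integral>\<^sup>+ x\<in>E. exp_p_pow q (p x) \<partial>M) < \<infinity>" using fin q1 by auto
  then obtain c where c: "(\<integral>\<^sup>+ x\<in>E. exp_p_pow q (p x) \<partial>M) = ennreal c" "0 \<le> c"
    using less_top_ennreal by (metis infinity_ennreal_def)
  have AEfin: "AE x in M. exp_p_pow q (p x) * indicator E x \<noteq> \<infinity>"
    by (rule nn_integral_PInf_AE) (use Cfin in auto)
  show ?thesis unfolding eventually_sequentially
  proof (intro exI allI impI)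
    fix n :: nat assume nN: "nat \<lceil>c\<rceil> \<le> n"
    have cn: "c \<le> real n" using nN by linarith
    have "real n + 1 \<le> exp (real n)" using exp_ge_add_one_self_aux[of "real n"] by linarith
    then have "c \<le> exp (real n)" using cn by linarith
    then have ecn: "exp (- real n) * c \<le> 1" by (simp add: exp_minus field_simps)
    define F where "F = {x\<in>E. p x > ereal (real n)}"
    have "modular M p E (\<lambda>x. indicator F x / \<epsilon>) \<le> (\<integral>\<^sup>+ x. ennreal (exp (- real n)) * (exp_p_pow q (p x) * indicator E x) \<partial>M)"
      unfolding modular_def
    proof (rule nn_integral_mono_AE)
      show "AE x in M. varpow \<bar>indicator F x / \<epsilon>\<bar> (p x) * indicator E x
               \<le> ennreal (exp (- real n)) * (exp_p_pow q (p x) * indicator E x)"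
        using AEfin
      proof eventually_elim
        case (elim x)
        show ?case
        proof (cases "x \<in> F")
          case True
          then have xE: "x \<in> E" and gt: "p x > ereal (real n)" unfolding F_def by auto
          then have "p x \<noteq> \<infinity>" using elim by (auto simp: exp_p_pow_def)
          with gt obtain r where r: "p x = ereal r" "r > real n" by (cases "p x") auto
          have ab: "\<bar>indicator F x / \<epsilon>\<bar> = 1 / \<epsilon>" using True eps by simp
          have "(1/\<epsilon>) powr r = exp (r * ln (1/\<epsilon>))" using eps by (simp add: powr_def)
          also have "\<dots> \<le> exp (- real n + q * r)"
            using r unfolding q_def by (simp add: algebra_simps)
          also have "\<dots> = exp (- real n) * exp (q * r)" by (rule exp_add)
          finally have "ennreal ((1/\<epsilon>) powr r) \<le> ennreal (exp (- real n)) * ennreal (exp (q * r))"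
            by (simp add: ennreal_mult[symmetric])
          then show ?thesis using xE ab r by (simp add: varpow_def exp_p_pow_def)
        next
          case False
          then show ?thesis by (cases "p x") (auto simp: varpow_def)
        qed
      qed
    qed
    also have "\<dots> = ennreal (exp (- real n)) * ennreal c"
      using c by (subst nn_integral_cmult) auto
    also have "\<dots> = ennreal (exp (- real n) * c)" using c by (simp add: ennreal_mult)
    also have "\<dots> \<le> 1" using ecn by simp
    finally show "lux_norm M p E (indicator {x\<in>E. p x > ereal (real n)}) \<le> ereal \<epsilon>"
      unfolding F_def[symmetric] using eps by (intro lux_le) auto
  qed
qed


theorem proposition8p1:
  fixes M :: "'a measure" and p :: "'a \<Rightarrow> ereal" and E :: "'a set"
  assumes p_meas: "p \<in> borel_measurable M"
    and p_range: "\<forall>x\<in>space M. 1 \<le> p x"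
    and E_meas: "E \<in> sets M"
    and E_fin: "emeasure M E < \<infinity>"
  defines "En \<equiv> (\<lambda>n::nat. {x\<in>E. p x > ereal (real n)})"
  shows "((\<forall>q::real. 1 \<le> q \<longrightarrow> (\<integral>\<^sup>+ x\<in>E. exp_p_pow q (p x) \<partial>M) < \<infinity>)
           \<longleftrightarrow> ((\<lambda>n. lux_norm M p E (indicator (En n))) \<longlonglongrightarrow> 0))
         \<and> (\<forall>q0::real. 1 \<le> q0 \<longrightarrow> (\<integral>\<^sup>+ x\<in>E. exp_p_pow q0 (p x) \<partial>M) = \<infinity> \<longrightarrow>
              (\<forall>n::nat. n \<ge> 1 \<longrightarrow> lux_norm M p E (indicator (En n)) \<ge> ereal (exp (- q0))))"
proof -
  have C2: "\<And>q0 n. 1 \<le> q0 \<Longrightarrow> (\<integral>\<^sup>+ x\<in>E. exp_p_pow q0 (p x) \<partial>M) = \<infinity> \<Longrightarrow>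
      lux_norm M p E (indicator (En n)) \<ge> ereal (exp (- q0))"
    unfolding En_def by (rule claim2[OF p_meas p_range E_meas E_fin])
  have "(\<forall>q::real. 1 \<le> q \<longrightarrow> (\<integral>\<^sup>+ x\<in>E. exp_p_pow q (p x) \<partial>M) < \<infinity>)
           \<longleftrightarrow> ((\<lambda>n. lux_norm M p E (indicator (En n))) \<longlonglongrightarrow> 0)"
  proof
    assume fin: "\<forall>q::real. 1 \<le> q \<longrightarrow> (\<integral>\<^sup>+ x\<in>E. exp_p_pow q (p x) \<partial>M) < \<infinity>"
    show "(\<lambda>n. lux_norm M p E (indicator (En n))) \<longlonglongrightarrow> 0"
    proof (rule order_tendstoI)
      fix a :: ereal assume "a < 0"
      then show "eventually (\<lambda>n. a < lux_norm M p E (indicator (En n))) sequentially"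
        using lux_nonneg by (intro always_eventually allI) (rule less_le_trans)
    next
      fix a :: ereal assume a: "0 < a"
      obtain e :: real where e: "0 < e" "e < 1" "ereal e < a"
      proof (cases a)
        case (real r)
        then show ?thesis using a by (intro that[of "min (1/2) (r/2)"]) (auto simp: min_def)
      next
        case PInf then show ?thesis by (intro that[of "1/2"]) auto
      next
        case MInf then show ?thesis using a by auto
      qed
      have "eventually (\<lambda>n. lux_norm M p E (indicator (En n)) \<le> ereal e) sequentially"
        unfolding En_def by (rule claim1[OF p_meas E_meas fin e(1,2)])
      then show "eventually (\<lambda>n. lux_norm M p E (indicator (En n)) < a) sequentially"
        by eventually_elim (use e in auto)
    qed
  next
    assume lim: "(\<lambda>n. lux_norm M p E (indicator (En n))) \<longlonglongrightarrow> 0"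
    show "\<forall>q::real. 1 \<le> q \<longrightarrow> (\<integral>\<^sup>+ x\<in>E. exp_p_pow q (p x) \<partial>M) < \<infinity>"
    proof (intro allI impI, rule ccontr)
      fix q :: real assume q: "1 \<le> q" and "\<not> (\<integral>\<^sup>+ x\<in>E. exp_p_pow q (p x) \<partial>M) < \<infinity>"
      then have inf: "(\<integral>\<^sup>+ x\<in>E. exp_p_pow q (p x) \<partial>M) = \<infinity>" using top.not_eq_extremum by fastforce
      have "eventually (\<lambda>n. lux_norm M p E (indicator (En n)) < ereal (exp (- q))) sequentially"
        by (rule order_tendstoD(2)[OF lim]) simp
      then obtain n where "lux_norm M p E (indicator (En n)) < ereal (exp (- q))"
        by (auto simp: eventually_sequentially)
      with C2[OF q inf, of n] show False by simp
    qed
  qed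
  then show ?thesis using C2 by blast
qed

end
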